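(* Let $K_1,\dots,K_n\colon\mathbb{E}(D)\to\mathbb{E}(D)$ be affine functions. Then $$\mu X.\,\min\{K_1(X),\dots,K_n(X)\}\;=\;\inf_{\substack{t_1,\dots,t_n\colon D\to[0,1]\\ t_1+\dots+t_n=\mathbb{1}}}\ \mu X.\,\sum_{i=1}^n t_i\cdot K_i(X).$$
   Context: $\mathbb{E}(D)$ is the set of functions $D\to[0,\infty]$ with pointwise order and operations ($\infty+x=\infty$, $0\cdot\infty=0$, $r\cdot\infty=\infty$ for $r>0$); $\min$ and the products $t_i\cdot K_i(X)$ are taken pointwise; $\mathbb{1}$ is the constant function $1$. $K$ is affine if $K(\alpha\eta_1+(1-\alpha)\eta_2)=\alpha K(\eta_1)+(1-\alpha)K(\eta_2)$ for all $\eta_1,\eta_2$ and $\alpha\in[0,1]$. $\mu X.\,G(X)$ denotes the least fixed point of a monotone $G$ on the complete lattice $\mathbb{E}(D)$. *)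

theory Defs
  imports Main "HOL-Library.Extended_Nonnegative_Real"
begin

text \<open>E(D) is rendered as the type 'd \<Rightarrow> ennreal (pointwise order, complete lattice).
  A map K on E(D) is affine if it preserves binary convex combinations with weights in [0,1].\<close>

definition affine_E :: "(('d \<Rightarrow> ennreal) \<Rightarrow> ('d \<Rightarrow> ennreal)) \<Rightarrow> bool" where
  "affine_E K \<longleftrightarrow>
     (\<forall>\<eta>1 \<eta>2 (\<alpha>::ennreal). \<alpha> \<le> 1 \<longrightarrow>
        K (\<lambda>d. \<alpha> * \<eta>1 d + (1 - \<alpha>) * \<eta>2 d) = (\<lambda>d. \<alpha> * K \<eta>1 d + (1 - \<alpha>) * K \<eta>2 d))"

end

theory Submission
  imports Defs
begin

lemma le_of_all: fixes x y :: ennreal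
  assumes "\<And>m::nat. ennreal (1 - 1 / real (Suc m)) * x \<le> y" shows "x \<le> y"
proof (cases "x = top")
  case True
  have "ennreal (1 - 1 / real (Suc 1)) * x = top" using True by (simp add: ennreal_mult_top)
  then show ?thesis using assms[of 1] by (simp add: top_unique)
next
  case False
  have l: "(\<lambda>m::nat. 1 - 1 / real (Suc m)) \<longlonglongrightarrow> 1 - 0"
    by (intro tendsto_diff tendsto_const) (use LIMSEQ_inverse_real_of_nat in \<open>simp add: inverse_eq_divide\<close>)
  have "(\<lambda>m::nat. x * ennreal (1 - 1 / real (Suc m))) \<longlonglongrightarrow> x * ennreal (1 - 0)"
    using False by (intro ennreal_tendsto_cmult tendsto_ennrealI l) (simp add: top.not_eq_extremum)
  then have "(\<lambda>m::nat. ennreal (1 - 1 / real (Suc m)) * x) \<longlonglongrightarrow> x"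
    by (simp add: mult.commute)
  then show ?thesis using assms by (simp add: LIMSEQ_le_const2)
qed

lemma affine_mono:
  assumes "affine_E K" "\<eta>1 \<le> \<eta>2" shows "K \<eta>1 \<le> K \<eta>2"
proof (rule le_funI)
  fix d
  show "K \<eta>1 d \<le> K \<eta>2 d"
  proof (rule le_of_all)
    fix m :: nat
    define a where "a = ennreal (1 / real (Suc m))"
    define \<eta>3 where "\<eta>3 = (\<lambda>d. \<eta>1 d + of_nat (Suc m) * (\<eta>2 d - \<eta>1 d))"
    have a1: "a \<le> 1" unfolding a_def by (simp add: ennreal_le_1 del: of_nat_Suc)
    have am: "a * of_nat (Suc m) = 1"
    proof -
      have "a * of_nat (Suc m) = ennreal (1 / real (Suc m)) * ennreal (real (Suc m))"
        unfolding a_def by (simp only: ennreal_of_nat_eq_real_of_nat)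
      also have "\<dots> = ennreal (1 / real (Suc m) * real (Suc m))"
        by (rule ennreal_mult[symmetric]) auto
      also have "\<dots> = 1" by (simp del: of_nat_Suc)
      finally show ?thesis .
    qed
    have aa: "a + (1 - a) = 1" using a1 by (rule add_diff_inverse_ennreal)
    have oa: "1 - a = ennreal (1 - 1 / real (Suc m))" unfolding a_def
      by (subst ennreal_1[symmetric], subst ennreal_minus) auto
    have eq: "(\<lambda>d. a * \<eta>3 d + (1 - a) * \<eta>1 d) = \<eta>2"
    proof
      fix d
      have le: "\<eta>1 d \<le> \<eta>2 d" using assms(2) by (simp add: le_fun_def)
      have "a * \<eta>3 d + (1 - a) * \<eta>1 d = (a + (1 - a)) * \<eta>1 d + (a * of_nat (Suc m)) * (\<eta>2 d - \<eta>1 d)"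
        unfolding \<eta>3_def by (simp add: algebra_simps)
      also have "\<dots> = \<eta>2 d" using aa am le by (simp add: add_diff_inverse_ennreal)
      finally show "a * \<eta>3 d + (1 - a) * \<eta>1 d = \<eta>2 d" .
    qed
    have "K \<eta>2 = (\<lambda>d. a * K \<eta>3 d + (1 - a) * K \<eta>1 d)"
      using assms(1) a1 unfolding affine_E_def by (metis eq)
    then have "K \<eta>2 d = a * K \<eta>3 d + (1 - a) * K \<eta>1 d" by simp
    then have "(1 - a) * K \<eta>1 d \<le> K \<eta>2 d" by simp
    then show "ennreal (1 - 1 / real (Suc m)) * K \<eta>1 d \<le> K \<eta>2 d" using oa by simp
  qed
qed

lemma mono_F:
  fixes K :: "nat \<Rightarrow> ('d \<Rightarrow> ennreal) \<Rightarrow> ('d \<Rightarrow> ennreal)"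
  assumes "\<forall>i\<in>{1..n}. affine_E (K i)"
  shows "mono (\<lambda>X d. Min ((\<lambda>i. K i X d) ` {1..(n::nat)}))"
proof (rule monoI, rule le_funI)
  fix X Y :: "'d \<Rightarrow> ennreal" and d
  assume "X \<le> Y"
  have h: "\<forall>i\<in>{1..n}. K i X d \<le> K i Y d"
  proof
    fix i assume "i \<in> {1..n}"
    then have "K i X \<le> K i Y" using assms affine_mono \<open>X \<le> Y\<close> by blast
    then show "K i X d \<le> K i Y d" by (rule le_funD)
  qed
  show "Min ((\<lambda>i. K i X d) ` {1..n}) \<le> Min ((\<lambda>i. K i Y d) ` {1..n})"
  proof (cases "n = 0")
    case True then show ?thesis by simp
  next
    case False
    show ?thesis
    proof (subst Min_le_iff)
      show "finite ((\<lambda>i. K i X d) ` {1..n})" by simp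
      show "(\<lambda>i. K i X d) ` {1..n} \<noteq> {}" using False by simp
      obtain j where j: "j \<in> {1..n}" "K j Y d = Min ((\<lambda>i. K i Y d) ` {1..n})"
        using Min_in[of "(\<lambda>i. K i Y d) ` {1..n}"] False by fastforce
      show "\<exists>a\<in>(\<lambda>i. K i X d) ` {1..n}. a \<le> Min ((\<lambda>i. K i Y d) ` {1..n})"
        using j h by force
    qed
  qed
qed

theorem propositionE3:
  fixes K :: "nat \<Rightarrow> ('d \<Rightarrow> ennreal) \<Rightarrow> ('d \<Rightarrow> ennreal)" and n :: nat
  assumes "n \<ge> 1"
    and "\<forall>i\<in>{1..n}. affine_E (K i)"
  shows "lfp (\<lambda>X d. Min ((\<lambda>i. K i X d) ` {1..n})) =
         (INF t\<in>{t :: nat \<Rightarrow> 'd \<Rightarrow> ennreal.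
                    (\<forall>i\<in>{1..n}. \<forall>d. t i d \<le> 1) \<and> (\<forall>d. (\<Sum>i=1..n. t i d) = 1)}.
            lfp (\<lambda>X d. \<Sum>i=1..n. t i d * K i X d))"
    (is "?L = (INF t\<in>?T. ?G t)")
proof (rule antisym)
  show "?L \<le> (INF t\<in>?T. ?G t)"
  proof (rule INF_greatest)
    fix t assume t: "t \<in> ?T"
    show "?L \<le> ?G t"
    proof (rule lfp_mono, rule le_funI)
      fix X d
      have "Min ((\<lambda>i. K i X d) ` {1..n}) = (\<Sum>i=1..n. t i d) * Min ((\<lambda>i. K i X d) ` {1..n})"
        using t by simp
      also have "\<dots> = (\<Sum>i=1..n. t i d * Min ((\<lambda>i. K i X d) ` {1..n}))"
        by (simp add: sum_distrib_right)
      also have "\<dots> \<le> (\<Sum>i=1..n. t i d * K i X d)"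
        by (intro sum_mono mult_left_mono) auto
      finally show "Min ((\<lambda>i. K i X d) ` {1..n}) \<le> (\<Sum>i=1..n. t i d * K i X d)" .
    qed
  qed
next
  have ne: "{1..n} \<noteq> {}" using assms(1) by simp
  have "\<forall>d. \<exists>j\<in>{1..n}. K j ?L d = Min ((\<lambda>i. K i ?L d) ` {1..n})"
  proof
    fix d
    have "Min ((\<lambda>i. K i ?L d) ` {1..n}) \<in> (\<lambda>i. K i ?L d) ` {1..n}"
    proof (rule Min_in)
      show "finite ((\<lambda>i. K i ?L d) ` {1..n})" by (rule finite_imageI) simp
      show "(\<lambda>i. K i ?L d) ` {1..n} \<noteq> {}" using ne by (simp only: image_is_empty not_False_eq_True)
    qed
    then obtain j where j: "j \<in> {1..n}" "Min ((\<lambda>i. K i ?L d) ` {1..n}) = K j ?L d"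
      by (rule imageE)
    from j(1) j(2)[symmetric] show "\<exists>j\<in>{1..n}. K j ?L d = Min ((\<lambda>i. K i ?L d) ` {1..n})"
      by (rule bexI[rotated])
  qed
  then have ex: "\<forall>d. \<exists>j. j \<in> {1..n} \<and> K j ?L d = Min ((\<lambda>i. K i ?L d) ` {1..n})" by blast
  obtain s where s0: "\<forall>d. s d \<in> {1..n} \<and> K (s d) ?L d = Min ((\<lambda>i. K i ?L d) ` {1..n})"
    using choice[OF ex] by blast
  have s: "\<And>d. s d \<in> {1..n}" "\<And>d. K (s d) ?L d = Min ((\<lambda>i. K i ?L d) ` {1..n})"
    using s0 by auto
  define t where "t = (\<lambda>i d. if i = s d then 1 else 0 :: ennreal)"
  have sumt: "(\<Sum>i=1..n. t i d * f i) = f (s d)" for d and f :: "nat \<Rightarrow> ennreal"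
  proof -
    have "(\<Sum>i=1..n. t i d * f i) = (\<Sum>i\<in>{1..n}. if i = s d then f i else 0)"
      unfolding t_def by (intro sum.cong) auto
    also have "\<dots> = f (s d)" using s(1)[of d] by (simp add: sum.delta')
    finally show ?thesis .
  qed
  have tT: "t \<in> ?T"
  proof -
    have "\<forall>i\<in>{1..n}. \<forall>d. t i d \<le> 1" by (simp add: t_def)
    moreover have "\<forall>d. (\<Sum>i=1..n. t i d) = 1"
      using sumt[where f="\<lambda>_. 1"] by simp
    ultimately show ?thesis by blast
  qed
  have fix1: "(\<lambda>d. Min ((\<lambda>i. K i ?L d) ` {1..n})) = ?L"
    using lfp_unfold[OF mono_F[OF assms(2)]] by simp
  have "?G t \<le> ?L"
  proof (rule lfp_lowerbound, rule le_funI)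
    fix d
    have "(\<Sum>i=1..n. t i d * K i ?L d) = K (s d) ?L d" by (rule sumt)
    also have "\<dots> = ?L d" using s(2)[of d] fun_cong[OF fix1, of d] by simp
    finally show "(\<Sum>i=1..n. t i d * K i ?L d) \<le> ?L d" by simp
  qed
  then show "(INF t\<in>?T. ?G t) \<le> ?L"
    using tT by (meson INF_lower order_trans)
qed

end
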